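(* For any $\epsilon_{\mathrm{sim}}\le1/2$, there exist episodic MDPs $\mathcal{M}^{\mathsf{sim}},\mathcal{M}^{\mathsf{real},1},\mathcal{M}^{\mathsf{real},2}$ (sharing state space, finite action set, rewards, initial state and horizon) and a finite function class $\mathcal{F}$ such that: 1. Each of $\mathcal{M}^{\mathsf{real},1},\mathcal{M}^{\mathsf{real},2}$ satisfies $\|P^{\mathsf{real},i}_h(\cdot\mid s,a)-P^{\mathsf{sim}}_h(\cdot\mid s,a)\|_{\mathrm{TV}}\le\epsilon_{\mathrm{sim}}$ for all $(s,a,h)$; $\mathcal{M}^{\mathsf{sim}}$ and both real MDPs are low-rank MDPs of common dimension $d$; $\mathcal{M}^{\mathsf{sim}}$ satisfies reachability with some $\lambda_{\min}^\star>0$; and $\mathcal{F}$ is Bellman complete with respect to $\mathcal{M}^{\mathsf{sim}}$ and each real MDP. 2. There exists a policy $\pi_{\mathrm{exp}}$ such that $\lambda_{\min}(\mathbb{E}^{\mathcal{M}^{\mathsf{sim}},\pi_{\mathrm{exp}}}[\boldsymbol{\phi}^{\mathsf{s}}(s_h,a_h)\boldsymbol{\phi}^{\mathsf{s}}(s_h,a_h)^\top])=1/2$ for all $h\in[H]$, and for any $T\ge0$, if $\pi_{\mathrm{exp}}$ is played on the real MDP for $T$ steps (episodes), $$\inf_{\widehat{\pi}}\ \sup_{\mathcal{M}\in\{\mathcal{M}^{\mathsf{real},1},\mathcal{M}^{\mathsf{real},2}\}}\mathbb{E}^{\mathcal{M},\pi_{\mathrm{exp}}}\big[V_0^{\mathcal{M},\star}-V_0^{\mathcal{M},\widehat{\pi}}\big]\ge\epsilon_{\mathrm{sim}},$$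 where the infimum is over all rules mapping the collected data to a policy $\widehat{\pi}$.
   Context: Episodic MDP $(\mathcal{S},\mathcal{A},\{P_h\}_{h=1}^H,\{r_h\},s_1,H)$ with finite $\mathcal{A}$ and deterministic rewards in $[0,1]$; $V_0^{\mathcal{M},\pi}$ is the expected total reward of $\pi$ from $s_1$, $V_0^{\mathcal{M},\star}=\sup_\pi V_0^{\mathcal{M},\pi}$; $\mathbb{E}^{\mathcal{M},\pi}$ is expectation when playing $\pi$ on $\mathcal{M}$. Low-rank MDP of dimension $d$: $P_h(\cdot\mid s,a)=\langle\boldsymbol{\phi}(s,a),\boldsymbol{\mu}_h(\cdot)\rangle$ with $\|\boldsymbol{\phi}\|_2\le1$, $\|\int|\mathrm{d}\boldsymbol{\mu}_h|\|_2\le\sqrt d$; $\boldsymbol{\phi}^{\mathsf{s}}$ denotes the features of $\mathcal{M}^{\mathsf{sim}}$. Reachability: $\min_h\sup_\pi\lambda_{\min}(\mathbb{E}^{\mathcal{M}^{\mathsf{sim}},\pi}[\boldsymbol{\phi}^{\mathsf{s}}\boldsymbol{\phi}^{\mathsf{s}\top}])\ge\lambda_{\min}^\star$. $\mathcal{F}=\prod_h\mathcal{F}_h$, $\mathcal{F}_h\subseteq\{\mathcal{S}\times\mathcal{A}\to[0,H]\}$, $f_{H+1}=0$; $\mathcal{T}f_{h+1}(s,a)=r_h(s,a)+\mathbb{E}_{s'\sim P_h(\cdot|s,a)}\max_{a'}f_{h+1}(s',a')$; Bellman complete: $\mathcal{T}f_{h+1}\in\mathcal{F}_h$ for all $f_{h+1}\in\mathcal{F}_{h+1}$.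 *)

theory Defs
  imports "HOL-Probability.Probability" "Jordan_Normal_Form.Char_Poly"
begin

text \<open>States are natural numbers (a countable state space), actions are
natural numbers drawn from a finite nonempty action set A, steps are h = 1..H.
A transition kernel is P :: nat => nat => nat => nat pmf, with P h s a the law of
the next state. A (Markov, possibly randomized)
policy is pi :: nat => nat => nat pmf, pi h s being the law of the action at step h.\<close>

type_synonym kernel = "nat \<Rightarrow> nat \<Rightarrow> nat \<Rightarrow> nat pmf"
type_synonym reward = "nat \<Rightarrow> nat \<Rightarrow> nat \<Rightarrow> real"
type_synonym policy = "nat \<Rightarrow> nat \<Rightarrow> nat pmf"

definition policies :: "nat set \<Rightarrow> policy set" where
  "policies A = {\<pi>. \<forall>h s. set_pmf (\<pi> h s) \<subseteq> A}"

text \<open>Value to go: polval P r pi k h s is the expected reward collected in the k steps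
h, h+1, ..., h+k-1 starting from state s at step h.\<close>
fun polval :: "kernel \<Rightarrow> reward \<Rightarrow> policy \<Rightarrow> nat \<Rightarrow> nat \<Rightarrow> nat \<Rightarrow> real" where
  "polval P r \<pi> 0 h s = 0"
| "polval P r \<pi> (Suc k) h s =
     measure_pmf.expectation (\<pi> h s)
       (\<lambda>a. r h s a + measure_pmf.expectation (P h s a) (\<lambda>s'. polval P r \<pi> k (Suc h) s'))"

definition V0 :: "kernel \<Rightarrow> reward \<Rightarrow> nat \<Rightarrow> nat \<Rightarrow> policy \<Rightarrow> real" where
  "V0 P r s1 H \<pi> = polval P r \<pi> H 1 s1"

definition V0_star :: "kernel \<Rightarrow> reward \<Rightarrow> nat set \<Rightarrow> nat \<Rightarrow> nat \<Rightarrow> real" where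
  "V0_star P r A s1 H = (SUP \<pi>\<in>policies A. V0 P r s1 H \<pi>)"

fun state_dist :: "kernel \<Rightarrow> policy \<Rightarrow> nat \<Rightarrow> nat \<Rightarrow> nat pmf"
and sa_dist :: "kernel \<Rightarrow> policy \<Rightarrow> nat \<Rightarrow> nat \<Rightarrow> (nat \<times> nat) pmf" where
  "state_dist P \<pi> s1 0 = return_pmf s1"
| "state_dist P \<pi> s1 (Suc 0) = return_pmf s1"
| "state_dist P \<pi> s1 (Suc (Suc h)) =
     bind_pmf (sa_dist P \<pi> s1 (Suc h)) (\<lambda>(s, a). P (Suc h) s a)"
| "sa_dist P \<pi> s1 h =
     bind_pmf (state_dist P \<pi> s1 h) (\<lambda>s. map_pmf (\<lambda>a. (s, a)) (\<pi> h s))"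

fun traj :: "kernel \<Rightarrow> policy \<Rightarrow> nat \<Rightarrow> nat \<Rightarrow> nat \<Rightarrow> (nat \<times> nat) list pmf" where
  "traj P \<pi> 0 h s = return_pmf []"
| "traj P \<pi> (Suc k) h s =
     bind_pmf (\<pi> h s) (\<lambda>a. bind_pmf (P h s a) (\<lambda>s'.
       map_pmf (\<lambda>rest. (s, a) # rest) (traj P \<pi> k (Suc h) s')))"

fun dataset :: "kernel \<Rightarrow> policy \<Rightarrow> nat \<Rightarrow> nat \<Rightarrow> nat \<Rightarrow> (nat \<times> nat) list list pmf" where
  "dataset P \<pi> s1 H 0 = return_pmf []"
| "dataset P \<pi> s1 H (Suc T) =
     bind_pmf (traj P \<pi> H 1 s1) (\<lambda>\<tau>. map_pmf (\<lambda>D. \<tau> # D) (dataset P \<pi> s1 H T))"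

definition tv_dist :: "'a pmf \<Rightarrow> 'a pmf \<Rightarrow> real" where
  "tv_dist p q = (SUP X. \<bar>measure_pmf.prob p X - measure_pmf.prob q X\<bar>)"

text \<open>Low-rank MDP of dimension d with features phi and (signed) measures mu_h,
vectors in R^d being represented by their coordinates i < d.\<close>
definition low_rank :: "kernel \<Rightarrow> nat set \<Rightarrow> nat \<Rightarrow> nat \<Rightarrow>
    (nat \<Rightarrow> nat \<Rightarrow> nat \<Rightarrow> real) \<Rightarrow> (nat \<Rightarrow> nat \<Rightarrow> nat \<Rightarrow> real) \<Rightarrow> bool" where
  "low_rank P A H d \<phi> \<mu> \<longleftrightarrow>
     (\<forall>s. \<forall>a\<in>A. sqrt (\<Sum>i<d. (\<phi> s a i)\<^sup>2) \<le> 1) \<and>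
     (\<forall>h\<in>{1..H}. \<forall>i<d. (\<lambda>s'. \<bar>\<mu> h s' i\<bar>) summable_on UNIV) \<and>
     (\<forall>h\<in>{1..H}. sqrt (\<Sum>i<d. (\<Sum>\<^sub>\<infinity>s'. \<bar>\<mu> h s' i\<bar>)\<^sup>2) \<le> sqrt (real d)) \<and>
     (\<forall>h\<in>{1..H}. \<forall>s. \<forall>a\<in>A. \<forall>s'. pmf (P h s a) s' = (\<Sum>i<d. \<phi> s a i * \<mu> h s' i))"

definition is_low_rank_mdp :: "kernel \<Rightarrow> nat set \<Rightarrow> nat \<Rightarrow> nat \<Rightarrow> bool" where
  "is_low_rank_mdp P A H d \<longleftrightarrow> (\<exists>\<phi> \<mu>. low_rank P A H d \<phi> \<mu>)"

definition feat_cov :: "kernel \<Rightarrow> nat \<Rightarrow> nat \<Rightarrow> (nat \<Rightarrow> nat \<Rightarrow> nat \<Rightarrow> real) \<Rightarrow>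
    policy \<Rightarrow> nat \<Rightarrow> real mat" where
  "feat_cov P s1 d \<phi> \<pi> h = mat d d (\<lambda>(i, j).
     measure_pmf.expectation (sa_dist P \<pi> s1 h) (\<lambda>(s, a). \<phi> s a i * \<phi> s a j))"

definition lambda_min :: "real mat \<Rightarrow> real" where
  "lambda_min M = Min {k. eigenvalue M k}"

text \<open>Bellman operator and Bellman completeness of F = prod_h F_h, F_h a class of
functions S x A -> [0,H] (functions compared on S x A only), with f_{H+1} = 0.\<close>
definition bellman_op :: "kernel \<Rightarrow> reward \<Rightarrow> nat set \<Rightarrow> nat \<Rightarrow>
    (nat \<Rightarrow> nat \<Rightarrow> real) \<Rightarrow> nat \<Rightarrow> nat \<Rightarrow> real" where
  "bellman_op P r A h g s a =
     r h s a + measure_pmf.expectation (P h s a) (\<lambda>s'. Max ((\<lambda>a'. g s' a') ` A))"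

definition fclass_at :: "(nat \<Rightarrow> (nat \<Rightarrow> nat \<Rightarrow> real) set) \<Rightarrow> nat \<Rightarrow> nat \<Rightarrow> (nat \<Rightarrow> nat \<Rightarrow> real) set" where
  "fclass_at F H h = (if h = H + 1 then {\<lambda>s a. 0} else F h)"

definition bellman_complete :: "kernel \<Rightarrow> reward \<Rightarrow> nat set \<Rightarrow> nat \<Rightarrow>
    (nat \<Rightarrow> (nat \<Rightarrow> nat \<Rightarrow> real) set) \<Rightarrow> bool" where
  "bellman_complete P r A H F \<longleftrightarrow>
     (\<forall>h\<in>{1..H}. \<forall>g\<in>fclass_at F H (h + 1).
        \<exists>f\<in>F h. \<forall>s. \<forall>a\<in>A. f s a = bellman_op P r A h g s a)"

definition valid_fclass :: "nat set \<Rightarrow> nat \<Rightarrow> (nat \<Rightarrow> (nat \<Rightarrow> nat \<Rightarrow> real) set) \<Rightarrow> bool" where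
  "valid_fclass A H F \<longleftrightarrow>
     (\<forall>h\<in>{1..H}. finite (F h) \<and> (\<forall>f\<in>F h. \<forall>s. \<forall>a\<in>A. 0 \<le> f s a \<and> f s a \<le> real H))"

end

theory Submission imports Defs begin

definition Bq :: "real \<Rightarrow> nat pmf" where
  "Bq p = map_pmf (\<lambda>b. if b then 1 else 2) (bernoulli_pmf p)"

lemma pmf_Bq:
  assumes "0 \<le> p" "p \<le> 1"
  shows "pmf (Bq p) s = (if s = 1 then p else if s = 2 then 1 - p else 0)"
proof -
  have "pmf (Bq p) s = p * indicator {s} (1::nat) + (1-p) * indicator {s} (2::nat)"
    using assms unfolding Bq_def map_pmf_def pmf_bind by simp
  then show ?thesis by (simp add: indicator_def)
qed

lemma prob_Bq:
  assumes "0 \<le> p" "p \<le> 1"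
  shows "measure_pmf.prob (Bq p) X = (if 1 \<in> X then p else 0) + (if 2 \<in> X then 1 - p else 0)"
proof -
  have "measure_pmf.prob (Bq p) X = measure_pmf.expectation (Bq p) (indicator X)"
    by simp
  also have "\<dots> = measure_pmf.expectation (bernoulli_pmf p) (\<lambda>b. indicator X (if b then 1::nat else 2))"
    unfolding Bq_def by (rule integral_map_pmf)
  also have "\<dots> = p * indicator X (1::nat) + (1 - p) * indicator X (2::nat)"
    by (subst integral_bernoulli_pmf) (use assms in auto)
  finally show ?thesis by (simp add: indicator_def)
qed

lemma int_ind_one: "measure_pmf.expectation M (\<lambda>s. if s = (x::nat) then 1 else 0 :: real) = pmf M x"
proof -
  have "(\<lambda>s. if s = x then 1 else 0 :: real) = indicator {x}" by (auto simp: indicator_def)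
  then show ?thesis by (simp add: measure_pmf_single)
qed

lemma pmf_integrable_bdd:
  fixes f :: "'a \<Rightarrow> real"
  assumes "\<And>x. \<bar>f x\<bar> \<le> B"
  shows "integrable (measure_pmf M) f"
  by (rule measure_pmf.integrable_const_bound[where B=B]) (use assms in auto)

lemma tv_Bq:
  assumes "0 \<le> p" "p \<le> 1" "0 \<le> q" "q \<le> 1" "\<bar>p - q\<bar> \<le> e"
  shows "tv_dist (Bq p) (Bq q) \<le> e"
  unfolding tv_dist_def
proof (rule cSUP_least)
  fix X :: "nat set"
  show "\<bar>measure_pmf.prob (Bq p) X - measure_pmf.prob (Bq q) X\<bar> \<le> e"
    using assms by (simp add: prob_Bq) (auto simp: abs_minus_commute)
qed simp


definition qf :: "real \<Rightarrow> nat \<Rightarrow> real" where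
  "qf x a = (if a = 2 then 1/2 + x else if a = 3 then 1/2 - x else 1/2)"

definition Pk :: "real \<Rightarrow> kernel" where
  "Pk x h s a = Bq (qf x a)"

definition rw :: reward where
  "rw h s a = (if h = 2 \<and> s = 1 then 1 else 0)"

definition pie :: policy where
  "pie h s = pmf_of_set {0,1}"

lemma qf_bounds: "\<bar>x\<bar> \<le> 1/2 \<Longrightarrow> 0 \<le> qf x a \<and> qf x a \<le> 1"
  unfolding qf_def by auto

lemma exp_le_const:
  fixes f :: "'a \<Rightarrow> real"
  assumes "\<And>x. f x \<le> c" "\<And>x. \<bar>f x\<bar> \<le> B"
  shows "measure_pmf.expectation M f \<le> c"
proof -
  have "measure_pmf.expectation M f \<le> measure_pmf.expectation M (\<lambda>_. c)"
    by (rule integral_mono) (use assms pmf_integrable_bdd[of f B M] in auto)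
  then show ?thesis by simp
qed

lemma exp_ge_const:
  fixes f :: "'a \<Rightarrow> real"
  assumes "\<And>x. c \<le> f x" "\<And>x. \<bar>f x\<bar> \<le> B"
  shows "c \<le> measure_pmf.expectation M f"
proof -
  have "measure_pmf.expectation M (\<lambda>_. c) \<le> measure_pmf.expectation M f"
    by (rule integral_mono) (use assms pmf_integrable_bdd[of f B M] in auto)
  then show ?thesis by simp
qed

lemma polval0: "polval P r \<pi> 0 h = (\<lambda>_. 0)"
  by auto

lemma polval1: "polval P rw \<pi> 1 (Suc 1) s = (if s = 1 then 1 else 0)"
  by (simp add: rw_def polval0)

lemma polval_2: "polval P r \<pi> 2 h s = measure_pmf.expectation (\<pi> h s)
   (\<lambda>a. r h s a + measure_pmf.expectation (P h s a) (\<lambda>s'. polval P r \<pi> 1 (Suc h) s'))"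
proof -
  have "polval P r \<pi> (Suc 1) h s = measure_pmf.expectation (\<pi> h s)
   (\<lambda>a. r h s a + measure_pmf.expectation (P h s a) (\<lambda>s'. polval P r \<pi> 1 (Suc h) s'))"
    by (rule polval.simps(2))
  then show ?thesis by (simp only: Suc_1)
qed

lemma V_Pk:
  assumes "\<bar>x\<bar> \<le> 1/2"
  shows "V0 (Pk x) rw 0 2 \<pi> = measure_pmf.expectation (\<pi> 1 0) (qf x)"
proof -
  have "V0 (Pk x) rw 0 2 \<pi> = measure_pmf.expectation (\<pi> 1 0)
       (\<lambda>a. rw 1 0 a + measure_pmf.expectation (Pk x 1 0 a) (\<lambda>s'. polval (Pk x) rw \<pi> 1 (Suc 1) s'))"
    unfolding V0_def by (rule polval_2)
  also have "\<dots> = measure_pmf.expectation (\<pi> 1 0) (qf x)"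
  proof (rule Bochner_Integration.integral_cong[OF refl])
    fix a
    have "measure_pmf.expectation (Pk x 1 0 a) (\<lambda>s'. polval (Pk x) rw \<pi> 1 (Suc 1) s') = pmf (Bq (qf x a)) 1"
      unfolding polval1 by (simp add: Pk_def int_ind_one)
    then show "rw 1 0 a + measure_pmf.expectation (Pk x 1 0 a) (\<lambda>s'. polval (Pk x) rw \<pi> 1 (Suc 1) s') = qf x a"
      using qf_bounds[OF assms, of a] by (simp add: rw_def pmf_Bq)
  qed
  finally show ?thesis .
qed

lemma V_bounds:
  assumes "\<bar>x\<bar> \<le> 1/2"
  shows "0 \<le> V0 (Pk x) rw 0 2 \<pi> \<and> V0 (Pk x) rw 0 2 \<pi> \<le> 1"
  unfolding V_Pk[OF assms]
  using qf_bounds[OF assms]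
  by (intro conjI exp_le_const[where B=1] exp_ge_const[where B=1]) (auto simp: abs_le_iff)

lemma V_sum:
  assumes "\<bar>x\<bar> \<le> 1/2"
  shows "V0 (Pk x) rw 0 2 \<pi> + V0 (Pk (-x)) rw 0 2 \<pi> = 1"
proof -
  have ax: "\<bar>-x\<bar> \<le> 1/2" using assms by simp
  have "V0 (Pk x) rw 0 2 \<pi> + V0 (Pk (-x)) rw 0 2 \<pi>
     = measure_pmf.expectation (\<pi> 1 0) (\<lambda>a. qf x a + qf (-x) a)"
    unfolding V_Pk[OF assms] V_Pk[OF ax]
  proof (rule Bochner_Integration.integral_add[symmetric])
    show "integrable (measure_pmf (\<pi> 1 0)) (qf x)"
      by (rule pmf_integrable_bdd[where B=1]) (use qf_bounds[OF assms] in \<open>auto simp: abs_le_iff\<close>)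
    show "integrable (measure_pmf (\<pi> 1 0)) (qf (-x))"
      by (rule pmf_integrable_bdd[where B=1]) (use qf_bounds[OF ax] in \<open>auto simp: abs_le_iff\<close>)
  qed
  also have "(\<lambda>a. qf x a + qf (-x) a) = (\<lambda>_. 1)" by (auto simp: qf_def)
  finally show ?thesis by simp
qed

lemma Vstar_ge:
  assumes "\<bar>x\<bar> \<le> 1/2"
  shows "1/2 + \<bar>x\<bar> \<le> V0_star (Pk x) rw {0,1,2,3} 0 2"
proof -
  define b :: nat where "b = (if 0 \<le> x then 2 else 3)"
  define \<pi>b :: policy where "\<pi>b = (\<lambda>h s. return_pmf b)"
  have pol: "\<pi>b \<in> policies {0,1,2,3}" by (auto simp: policies_def \<pi>b_def b_def)
  have "V0 (Pk x) rw 0 2 \<pi>b = qf x b" by (simp add: V_Pk[OF assms] \<pi>b_def)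
  also have "\<dots> = 1/2 + \<bar>x\<bar>" by (auto simp: qf_def b_def)
  finally have v: "V0 (Pk x) rw 0 2 \<pi>b = 1/2 + \<bar>x\<bar>" .
  have bdd: "bdd_above ((\<lambda>\<pi>. V0 (Pk x) rw 0 2 \<pi>) ` policies {0,1,2,3})"
    using V_bounds[OF assms] by (intro bdd_aboveI[where M=1]) auto
  have "V0 (Pk x) rw 0 2 \<pi>b \<le> (SUP \<pi>\<in>policies {0,1,2,3}. V0 (Pk x) rw 0 2 \<pi>)" by (rule cSUP_upper[OF pol bdd])
  then show ?thesis unfolding V0_star_def v .

qed


lemma set_pie: "set_pmf (pie h s) = {0,1}"
  unfolding pie_def by (simp add: set_pmf_of_set)

lemma Pk_01: "a \<in> {0,1} \<Longrightarrow> Pk x h s a = Pk y h s a"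
  unfolding Pk_def qf_def by auto

lemma traj_eq: "traj (Pk x) pie k h s = traj (Pk y) pie k h s"
proof (induction k arbitrary: h s)
  case 0
  then show ?case by simp
next
  case (Suc k)
  show ?case
    unfolding traj.simps Suc.IH
  proof (rule bind_pmf_cong[OF refl])
    fix a assume "a \<in> set_pmf (pie h s)"
    then have "a \<in> {0,1}" by (simp add: set_pie)
    then show "bind_pmf (Pk x h s a) (\<lambda>s'. map_pmf ((#) (s, a)) (traj (Pk y) pie k (Suc h) s')) =
          bind_pmf (Pk y h s a) (\<lambda>s'. map_pmf ((#) (s, a)) (traj (Pk y) pie k (Suc h) s'))"
      using Pk_01 by metis
  qed
qed

lemma dataset_eq: "dataset (Pk x) pie s1 H T = dataset (Pk y) pie s1 H T"
  by (induction T) (simp_all add: traj_eq[of x _ _ _ y])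

lemma Bq_summ:
  assumes "0 \<le> p" "p \<le> 1"
  shows "(\<lambda>s'. \<bar>pmf (Bq p) s'\<bar>) summable_on UNIV \<and> (\<Sum>\<^sub>\<infinity>s'. \<bar>pmf (Bq p) s'\<bar>) = 1"
proof -
  let ?f = "\<lambda>s'. \<bar>pmf (Bq p) s'\<bar>"
  have z: "\<And>x. x \<in> UNIV - {1,2} \<Longrightarrow> ?f x = 0" using assms by (auto simp: pmf_Bq)
  have "?f summable_on UNIV \<longleftrightarrow> ?f summable_on {1,2}"
    by (rule summable_on_cong_neutral) (use z in auto)
  moreover have "infsum ?f UNIV = infsum ?f {1,2}"
    by (rule infsum_cong_neutral) (use z in auto)
  ultimately show ?thesis using assms by (simp add: pmf_Bq)
qed

definition phis :: "nat \<Rightarrow> nat \<Rightarrow> nat \<Rightarrow> real" where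
  "phis s a i = (if i = a mod 2 then 1 else 0)"

definition mus :: "nat \<Rightarrow> nat \<Rightarrow> nat \<Rightarrow> real" where
  "mus h s' i = pmf (Bq (1/2)) s'"

definition phik :: "nat \<Rightarrow> nat \<Rightarrow> nat \<Rightarrow> real" where
  "phik s a i = (if a = 2 then (if i = 0 then 1 else 0) else if a = 3 then (if i = 1 then 1 else 0) else 1/2)"

definition muk :: "real \<Rightarrow> nat \<Rightarrow> nat \<Rightarrow> nat \<Rightarrow> real" where
  "muk x h s' i = (if i = 0 then pmf (Bq (1/2 + x)) s' else pmf (Bq (1/2 - x)) s')"

lemma sum2: "(\<Sum>i<(2::nat). f i) = f 0 + (f 1 :: real)"
  by (simp add: numeral_2_eq_2)

lemma lowrank_sim: "low_rank (Pk 0) A H 2 phis mus"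
proof -
  have m2: "a mod 2 = 0 \<or> a mod 2 = 1" for a :: nat by auto
  have s: "(\<Sum>i<2. (phis s a i)\<^sup>2) = 1" for s a
    unfolding sum2 phis_def using m2[of a] by auto
  have pm: "pmf (Pk 0 h s a) s' = (\<Sum>i<2. phis s a i * mus h s' i)" for h s a s'
    unfolding sum2 phis_def mus_def Pk_def qf_def using m2[of a] by auto
  have bs: "(\<lambda>s'. \<bar>mus h s' i\<bar>) summable_on UNIV \<and> (\<Sum>\<^sub>\<infinity>s'. \<bar>mus h s' i\<bar>) = 1" for h i
    unfolding mus_def by (rule Bq_summ) auto
  show ?thesis unfolding low_rank_def
    using s pm bs by (simp add: sum2)
qed

lemma lowrank_k:
  assumes "\<bar>x\<bar> \<le> 1/2"
  shows "low_rank (Pk x) A H 2 phik (muk x)"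
proof -
  have s: "sqrt (\<Sum>i<2. (phik s a i)\<^sup>2) \<le> 1" for s a
  proof -
    have "(\<Sum>i<2. (phik s a i)\<^sup>2) \<le> 1" unfolding sum2 phik_def by (auto simp: power2_eq_square)
    then show ?thesis by simp
  qed
  have b1: "0 \<le> 1/2 + x" "1/2 + x \<le> 1" "0 \<le> 1/2 - x" "1/2 - x \<le> 1" using assms by auto
  have pm: "pmf (Pk x h s a) s' = (\<Sum>i<2. phik s a i * muk x h s' i)" for h s a s'
    unfolding sum2 phik_def muk_def Pk_def using qf_bounds[OF assms, of a] b1
    by (auto simp: pmf_Bq qf_def field_simps)
  have bs: "(\<lambda>s'. \<bar>muk x h s' i\<bar>) summable_on UNIV \<and> (\<Sum>\<^sub>\<infinity>s'. \<bar>muk x h s' i\<bar>) = 1" for h i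
    unfolding muk_def using b1 Bq_summ[of "1/2+x"] Bq_summ[of "1/2-x"] by (cases "i = 0") simp_all
  show ?thesis unfolding low_rank_def
    using s pm bs by (simp add: sum2)
qed


lemma sum2': "(\<Sum>j\<in>{0..<2::nat}. f j) = f 0 + (f 1 :: real)"
  by (simp add: numeral_2_eq_2)

lemma phis_prod: "(\<lambda>(s,a). phis s a i * phis s a j) = (if i = j then (\<lambda>(s,a). phis s a i) else (\<lambda>_. 0))"
  by (auto simp: phis_def fun_eq_iff)

lemma fc_general: "feat_cov P s1 2 phis \<pi> h =
   mat 2 2 (\<lambda>(i,j). if i = j then measure_pmf.expectation (sa_dist P \<pi> s1 h) (\<lambda>(s,a). phis s a i) else 0)"
  unfolding feat_cov_def
  by (rule eq_matI) (auto simp: phis_prod simp del: sa_dist.simps)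

lemma snd_sa_pie: "map_pmf snd (sa_dist P pie s1 h) = pmf_of_set {0,1}"
  by (simp add: map_bind_pmf map_pmf_comp pie_def)

lemma exp_phis_pie:
  assumes "i < 2"
  shows "measure_pmf.expectation (sa_dist P pie s1 h) (\<lambda>(s,a). phis s a i) = 1/2"
proof -
  have "(\<lambda>(s,a). phis s a i) = (\<lambda>x. (\<lambda>a. if i = a mod 2 then 1 else 0 :: real) (snd x))"
    by (auto simp: phis_def fun_eq_iff)
  then have "measure_pmf.expectation (sa_dist P pie s1 h) (\<lambda>(s,a). phis s a i)
      = measure_pmf.expectation (map_pmf snd (sa_dist P pie s1 h)) (\<lambda>a. if i = a mod 2 then 1 else 0 :: real)"
    by (simp only: integral_map_pmf)
  also have "\<dots> = 1/2" unfolding snd_sa_pie using assms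
    by (subst integral_pmf_of_set) (auto simp: less_2_cases_iff)
  finally show ?thesis .
qed

lemma fc_pie: "feat_cov P s1 2 phis pie h = mat 2 2 (\<lambda>(i,j). if i = j then 1/2 else 0)"
  unfolding fc_general by (rule eq_matI) (auto simp: exp_phis_pie simp del: sa_dist.simps)

lemma diag_eig:
  fixes p :: "nat \<Rightarrow> real"
  assumes "eigenvalue (mat 2 2 (\<lambda>(i,j). if i = j then p i else 0)) k"
  shows "k = p 0 \<or> k = p 1"
proof -
  let ?M = "mat 2 2 (\<lambda>(i,j). if i = j then p i else 0) :: real mat"
  obtain v where v: "v \<in> carrier_vec 2" "v \<noteq> 0\<^sub>v 2" "?M *\<^sub>v v = k \<cdot>\<^sub>v v"
    using assms unfolding eigenvalue_def eigenvector_def by auto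
  have row: "p i * v $ i = k * v $ i" if "i < 2" for i
  proof -
    have "(?M *\<^sub>v v) $ i = (k \<cdot>\<^sub>v v) $ i" using v(3) by simp
    moreover have "(?M *\<^sub>v v) $ i = p i * v $ i"
      using that v(1) by (auto simp: mult_mat_vec_def scalar_prod_def sum2' less_2_cases_iff)
    ultimately show ?thesis using that v(1) by simp
  qed
  obtain i where i: "i < 2" "v $ i \<noteq> 0"
  proof (rule ccontr)
    assume "\<not> thesis"
    with that have "\<forall>i<2. v $ i = 0" by blast
    then have "v = 0\<^sub>v 2" using v(1) by (intro eq_vecI) auto
    with v(2) show False by simp
  qed
  then have "k = p i" using row[OF i(1)] by simp
  then show ?thesis using i(1) by (auto simp: less_2_cases_iff)
qed

lemma diag_eig_c: "eigenvalue (mat 2 2 (\<lambda>(i,j). if i = j then c else 0)) (c::real)"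
  unfolding eigenvalue_def eigenvector_def
proof (intro exI conjI)
  let ?M = "mat 2 2 (\<lambda>(i,j). if i = j then c else 0) :: real mat"
  show "unit_vec 2 0 \<in> carrier_vec (dim_row ?M)" by simp
  show "unit_vec 2 0 \<noteq> 0\<^sub>v (dim_row ?M)"
  proof
    assume "unit_vec 2 0 = 0\<^sub>v (dim_row ?M)"
    then have "unit_vec 2 0 $ 0 = (0\<^sub>v 2 :: real vec) $ 0" by simp
    then show False by simp
  qed
  show "?M *\<^sub>v unit_vec 2 0 = c \<cdot>\<^sub>v unit_vec 2 0"
    by (rule eq_vecI) (auto simp: mult_mat_vec_def scalar_prod_def sum2' less_2_cases_iff)
qed

lemma lmin_c: "lambda_min (mat 2 2 (\<lambda>(i,j). if i = j then c else 0)) = (c::real)"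
proof -
  have "{k. eigenvalue (mat 2 2 (\<lambda>(i,j). if i = j then c else 0)) k} = {c}"
    using diag_eig[of "\<lambda>_. c"] diag_eig_c[of c] by auto
  then show ?thesis unfolding lambda_min_def by simp
qed

lemma lmin_bound:
  fixes p :: "nat \<Rightarrow> real"
  shows "lambda_min (mat 2 2 (\<lambda>(i,j). if i = j then p i else 0)) \<le> max (max (p 0) (p 1)) (Min ({}::real set))"
proof -
  let ?S = "{k. eigenvalue (mat 2 2 (\<lambda>(i,j). if i = j then p i else 0)) k}"
  have sub: "?S \<subseteq> {p 0, p 1}" using diag_eig by blast
  then have fin: "finite ?S" by (rule finite_subset) simp
  show ?thesis
  proof (cases "?S = {}")
    case True
    show ?thesis unfolding lambda_min_def True by simp
  next
    case False
    have "Min ?S \<in> ?S" by (rule Min_in[OF fin False])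
    then have "Min ?S \<in> {p 0, p 1}" using sub by blast
    then show ?thesis unfolding lambda_min_def by auto
  qed
qed

lemma pie_pol: "pie \<in> policies {0,1,2,3}"
  by (auto simp: policies_def set_pie)

lemma reach:
  "\<forall>h\<in>{1..2}. (SUP \<pi>\<in>policies {0,1,2,3}. lambda_min (feat_cov (Pk 0) 0 2 phis \<pi> h)) \<ge> 1/2"
proof
  fix h :: nat
  have bnd: "lambda_min (feat_cov (Pk 0) 0 2 phis \<pi> h) \<le> max 1 (Min ({}::real set))" for \<pi>
  proof -
    let ?p = "\<lambda>i. measure_pmf.expectation (sa_dist (Pk 0) \<pi> 0 h) (\<lambda>(s,a). phis s a i)"
    have p1: "?p i \<le> 1" for i
      by (rule exp_le_const[where B=1]) (auto simp: phis_def)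
    have "lambda_min (feat_cov (Pk 0) 0 2 phis \<pi> h) \<le> max (max (?p 0) (?p 1)) (Min ({}::real set))"
      unfolding fc_general by (rule lmin_bound)
    also have "\<dots> \<le> max 1 (Min ({}::real set))" using p1[of 0] p1[of 1] by auto
    finally show ?thesis .
  qed
  have bdd: "bdd_above ((\<lambda>\<pi>. lambda_min (feat_cov (Pk 0) 0 2 phis \<pi> h)) ` policies {0,1,2,3})"
    using bnd by (intro bdd_aboveI[where M="max 1 (Min ({}::real set))"]) auto
  have "lambda_min (feat_cov (Pk 0) 0 2 phis pie h) = 1/2"
    unfolding fc_pie by (rule lmin_c)
  then show "(SUP \<pi>\<in>policies {0,1,2,3}. lambda_min (feat_cov (Pk 0) 0 2 phis \<pi> h)) \<ge> 1/2"
    using cSUP_upper[OF pie_pol bdd] by simp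
qed


definition Fc :: "real \<Rightarrow> nat \<Rightarrow> (nat \<Rightarrow> nat \<Rightarrow> real) set" where
  "Fc e h = (if h = 1 then (\<lambda>y s a. qf y a) ` {0, e, -e}
             else if h = 2 then {\<lambda>s a. if s = 1 then 1 else 0} else {})"

lemma bc:
  assumes "\<bar>x\<bar> \<le> 1/2" "x \<in> {0, e, -e}"
  shows "bellman_complete (Pk x) rw {0,1,2,3} 2 (Fc e)"
  unfolding bellman_complete_def
proof (intro ballI)
  fix h g assume h: "h \<in> {1..2}" and g: "g \<in> fclass_at (Fc e) 2 (h+1)"
  from h have "h = 1 \<or> h = 2" by auto
  then show "\<exists>f\<in>Fc e h. \<forall>s. \<forall>a\<in>{0,1,2,3}. f s a = bellman_op (Pk x) rw {0,1,2,3} h g s a"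
  proof
    assume h1: "h = 1"
    then have gdef: "g = (\<lambda>s a. if s = 1 then 1 else 0)" using g by (simp add: fclass_at_def Fc_def)
    have "bellman_op (Pk x) rw {0,1,2,3} 1 g s a = qf x a" for s a
    proof -
      have "(\<lambda>s'. Max ((\<lambda>a'. g s' a') ` {0,1,2,3})) = (\<lambda>s'. if s' = 1 then 1 else 0)"
        by (simp add: gdef fun_eq_iff)
      then show ?thesis unfolding bellman_op_def using qf_bounds[OF assms(1), of a]
        by (simp add: rw_def Pk_def int_ind_one pmf_Bq)
    qed
    moreover have "(\<lambda>s a. qf x a) \<in> Fc e 1" using assms(2) by (auto simp: Fc_def)
    ultimately show ?thesis using h1 by auto
  next
    assume h2: "h = 2"
    then have "g = (\<lambda>s a. 0)" using g by (simp add: fclass_at_def)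
    then have eq: "\<forall>s. \<forall>a\<in>{0,1,2,3}. (\<lambda>s a. if s = 1 then 1 else (0::real)) s a = bellman_op (Pk x) rw {0,1,2,3} 2 g s a"
      by (simp add: bellman_op_def rw_def)
    have mem: "(\<lambda>s a. if s = 1 then 1 else (0::real)) \<in> Fc e 2" by (simp add: Fc_def)
    show ?thesis unfolding h2
    proof (rule bexI[where x="\<lambda>s a. if s = 1 then 1 else (0::real)"])
      show "\<forall>s. \<forall>a\<in>{0,1,2,3}. (if s = 1 then 1 else (0::real)) = bellman_op (Pk x) rw {0,1,2,3} 2 g s a"
        using eq by blast
    qed (rule mem)
  qed
qed

lemma valid:
  assumes "\<bar>e\<bar> \<le> 1/2"
  shows "valid_fclass {0,1,2,3} 2 (Fc e)"
  unfolding valid_fclass_def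
proof (rule ballI)
  fix h :: nat assume h: "h \<in> {1..2}"
  have fin: "finite (Fc e h)" by (simp add: Fc_def)
  have b: "\<bar>y\<bar> \<le> 1/2" if "y \<in> {0, e, -e}" for y using that assms by auto
  have "\<forall>f\<in>Fc e h. \<forall>s. \<forall>a\<in>{0,1,2,3}. 0 \<le> f s a \<and> f s a \<le> real 2"
  proof (intro ballI allI)
    fix f s a assume f: "f \<in> Fc e h"
    from h have "h = 1 \<or> h = 2" by auto
    then show "0 \<le> f s a \<and> f s a \<le> real 2"
    proof
      assume "h = 1"
      then obtain y where y: "y \<in> {0,e,-e}" "f = (\<lambda>s a. qf y a)" using f by (auto simp: Fc_def)
      then show ?thesis using qf_bounds[OF b[OF y(1)], of a] by simp
    next
      assume "h = 2"
      then have "f = (\<lambda>s a. if s = 1 then 1 else 0)" using f by (simp add: Fc_def)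
      then show ?thesis by simp
    qed
  qed
  with fin show "finite (Fc e h) \<and> (\<forall>f\<in>Fc e h. \<forall>s. \<forall>a\<in>{0,1,2,3}. 0 \<le> f s a \<and> f s a \<le> real 2)" by blast
qed

lemma tv_Pk:
  assumes "\<bar>x\<bar> \<le> 1/2"
  shows "tv_dist (Pk x h s a) (Pk 0 h s a) \<le> \<bar>x\<bar>"
  unfolding Pk_def
  by (rule tv_Bq) (use qf_bounds[OF assms, of a] qf_bounds[of 0 a] in \<open>auto simp: qf_def\<close>)

lemma lower:
  assumes "0 \<le> e" "e \<le> 1/2" "\<forall>D. rl D \<in> policies {0,1,2,3}"
  shows "max (measure_pmf.expectation (dataset (Pk e) pie 0 2 T)
                     (\<lambda>D. V0_star (Pk e) rw {0,1,2,3} 0 2 - V0 (Pk e) rw 0 2 (rl D)))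
                  (measure_pmf.expectation (dataset (Pk (-e)) pie 0 2 T)
                     (\<lambda>D. V0_star (Pk (-e)) rw {0,1,2,3} 0 2 - V0 (Pk (-e)) rw 0 2 (rl D)))
                \<ge> e"
proof -
  have e1: "\<bar>e\<bar> \<le> 1/2" and e2: "\<bar>-e\<bar> \<le> 1/2" using assms by auto
  define Q where "Q = dataset (Pk e) pie 0 2 T"
  have Q2: "dataset (Pk (-e)) pie 0 2 T = Q" unfolding Q_def by (rule dataset_eq)
  define c1 where "c1 = V0_star (Pk e) rw {0,1,2,3} 0 2"
  define c2 where "c2 = V0_star (Pk (-e)) rw {0,1,2,3} 0 2"
  have c1: "1/2 + e \<le> c1" unfolding c1_def using Vstar_ge[OF e1] assms by simp
  have c2: "1/2 + e \<le> c2" unfolding c2_def using Vstar_ge[OF e2] assms by simp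
  let ?f1 = "\<lambda>D. c1 - V0 (Pk e) rw 0 2 (rl D)"
  let ?f2 = "\<lambda>D. c2 - V0 (Pk (-e)) rw 0 2 (rl D)"
  have i1: "integrable (measure_pmf Q) ?f1"
  proof (rule pmf_integrable_bdd[where B="\<bar>c1\<bar> + 1"])
    fix D
    have vb: "0 \<le> V0 (Pk e) rw 0 2 (rl D)" "V0 (Pk e) rw 0 2 (rl D) \<le> 1" using V_bounds[OF e1] by auto
    have "- \<bar>c1\<bar> \<le> c1" "c1 \<le> \<bar>c1\<bar>" by auto
    then show "\<bar>c1 - V0 (Pk e) rw 0 2 (rl D)\<bar> \<le> \<bar>c1\<bar> + 1"
      unfolding abs_le_iff using vb by linarith
  qed
  have i2: "integrable (measure_pmf Q) ?f2"
  proof (rule pmf_integrable_bdd[where B="\<bar>c2\<bar> + 1"])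
    fix D
    have vb: "0 \<le> V0 (Pk (-e)) rw 0 2 (rl D)" "V0 (Pk (-e)) rw 0 2 (rl D) \<le> 1" using V_bounds[OF e2] by auto
    have "- \<bar>c2\<bar> \<le> c2" "c2 \<le> \<bar>c2\<bar>" by auto
    then show "\<bar>c2 - V0 (Pk (-e)) rw 0 2 (rl D)\<bar> \<le> \<bar>c2\<bar> + 1"
      unfolding abs_le_iff using vb by linarith
  qed
  have "measure_pmf.expectation Q ?f1 + measure_pmf.expectation Q ?f2
      = measure_pmf.expectation Q (\<lambda>D. ?f1 D + ?f2 D)"
    by (rule Bochner_Integration.integral_add[symmetric, OF i1 i2])
  also have "(\<lambda>D. ?f1 D + ?f2 D) = (\<lambda>D. c1 + c2 - 1)"
    using V_sum[OF e1] by (auto simp: fun_eq_iff algebra_simps)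
  finally have "measure_pmf.expectation Q ?f1 + measure_pmf.expectation Q ?f2 = c1 + c2 - 1"
    by simp
  then have "measure_pmf.expectation Q ?f1 + measure_pmf.expectation Q ?f2 \<ge> 2 * e"
    using c1 c2 by linarith
  then show ?thesis unfolding Q2 c1_def[symmetric] c2_def[symmetric] Q_def[symmetric] by linarith
qed

theorem proposition5:
  fixes \<epsilon> :: real
  assumes "0 \<le> \<epsilon>" and "\<epsilon> \<le> 1 / 2"
  shows "\<exists>(A :: nat set) (r :: reward) (s1 :: nat) (H :: nat)
           (Psim :: kernel) (P1 :: kernel) (P2 :: kernel) (d :: nat)
           (F :: nat \<Rightarrow> (nat \<Rightarrow> nat \<Rightarrow> real) set).
     finite A \<and> A \<noteq> {} \<and>
     (\<forall>h s a. 0 \<le> r h s a \<and> r h s a \<le> 1) \<and>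
     (\<forall>h\<in>{1..H}. \<forall>s. \<forall>a\<in>A.
        tv_dist (P1 h s a) (Psim h s a) \<le> \<epsilon> \<and> tv_dist (P2 h s a) (Psim h s a) \<le> \<epsilon>) \<and>
     is_low_rank_mdp P1 A H d \<and> is_low_rank_mdp P2 A H d \<and>
     (\<exists>\<phi>s \<mu>s. low_rank Psim A H d \<phi>s \<mu>s \<and>
        (\<exists>lam_star > 0. \<forall>h\<in>{1..H}.
           (SUP \<pi>\<in>policies A. lambda_min (feat_cov Psim s1 d \<phi>s \<pi> h)) \<ge> lam_star) \<and>
        (\<exists>\<pi>exp\<in>policies A.
           (\<forall>h\<in>{1..H}. lambda_min (feat_cov Psim s1 d \<phi>s \<pi>exp h) = 1 / 2) \<and>
           (\<forall>T::nat. \<forall>rule :: (nat \<times> nat) list list \<Rightarrow> policy.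
              (\<forall>D. rule D \<in> policies A) \<longrightarrow>
              max (measure_pmf.expectation (dataset P1 \<pi>exp s1 H T)
                     (\<lambda>D. V0_star P1 r A s1 H - V0 P1 r s1 H (rule D)))
                  (measure_pmf.expectation (dataset P2 \<pi>exp s1 H T)
                     (\<lambda>D. V0_star P2 r A s1 H - V0 P2 r s1 H (rule D)))
                \<ge> \<epsilon>))) \<and>
     valid_fclass A H F \<and>
     bellman_complete Psim r A H F \<and> bellman_complete P1 r A H F \<and> bellman_complete P2 r A H F"
proof -
  have e1: "\<bar>\<epsilon>\<bar> \<le> 1/2" and e2: "\<bar>-\<epsilon>\<bar> \<le> 1/2" and e0: "\<bar>0::real\<bar> \<le> 1/2"
    using assms by auto
  let ?A = "{0,1,2,3} :: nat set"
  have f_r: "\<forall>h s a. 0 \<le> rw h s a \<and> rw h s a \<le> 1" by (simp add: rw_def)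
  have f_tv: "\<forall>h\<in>{1..2}. \<forall>s. \<forall>a\<in>?A.
        tv_dist (Pk \<epsilon> h s a) (Pk 0 h s a) \<le> \<epsilon> \<and> tv_dist (Pk (-\<epsilon>) h s a) (Pk 0 h s a) \<le> \<epsilon>"
    using tv_Pk[OF e1] tv_Pk[OF e2] assms by auto
  have f_lr1: "is_low_rank_mdp (Pk \<epsilon>) ?A 2 2"
    unfolding is_low_rank_mdp_def using lowrank_k[OF e1] by blast
  have f_lr2: "is_low_rank_mdp (Pk (-\<epsilon>)) ?A 2 2"
    unfolding is_low_rank_mdp_def using lowrank_k[OF e2] by blast
  have f_exp: "\<forall>h\<in>{1..2}. lambda_min (feat_cov (Pk 0) 0 2 phis pie h) = 1 / 2"
    by (simp add: fc_pie lmin_c)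
  have f_low: "\<forall>T::nat. \<forall>rule :: (nat \<times> nat) list list \<Rightarrow> policy.
              (\<forall>D. rule D \<in> policies ?A) \<longrightarrow>
              max (measure_pmf.expectation (dataset (Pk \<epsilon>) pie 0 2 T)
                     (\<lambda>D. V0_star (Pk \<epsilon>) rw ?A 0 2 - V0 (Pk \<epsilon>) rw 0 2 (rule D)))
                  (measure_pmf.expectation (dataset (Pk (-\<epsilon>)) pie 0 2 T)
                     (\<lambda>D. V0_star (Pk (-\<epsilon>)) rw ?A 0 2 - V0 (Pk (-\<epsilon>)) rw 0 2 (rule D)))
                \<ge> \<epsilon>"
    using lower[OF assms] by blast
  have f_reach: "\<exists>lam_star > 0. \<forall>h\<in>{1..2}.
           (SUP \<pi>\<in>policies ?A. lambda_min (feat_cov (Pk 0) 0 2 phis \<pi> h)) \<ge> lam_star"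
    using reach by (intro exI[where x="1/2"]) auto
  have f_sim: "\<exists>\<phi>s \<mu>s. low_rank (Pk 0) ?A 2 2 \<phi>s \<mu>s \<and>
        (\<exists>lam_star > 0. \<forall>h\<in>{1..2}.
           (SUP \<pi>\<in>policies ?A. lambda_min (feat_cov (Pk 0) 0 2 \<phi>s \<pi> h)) \<ge> lam_star) \<and>
        (\<exists>\<pi>exp\<in>policies ?A.
           (\<forall>h\<in>{1..2}. lambda_min (feat_cov (Pk 0) 0 2 \<phi>s \<pi>exp h) = 1 / 2) \<and>
           (\<forall>T::nat. \<forall>rule :: (nat \<times> nat) list list \<Rightarrow> policy.
              (\<forall>D. rule D \<in> policies ?A) \<longrightarrow>
              max (measure_pmf.expectation (dataset (Pk \<epsilon>) \<pi>exp 0 2 T)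
                     (\<lambda>D. V0_star (Pk \<epsilon>) rw ?A 0 2 - V0 (Pk \<epsilon>) rw 0 2 (rule D)))
                  (measure_pmf.expectation (dataset (Pk (-\<epsilon>)) \<pi>exp 0 2 T)
                     (\<lambda>D. V0_star (Pk (-\<epsilon>)) rw ?A 0 2 - V0 (Pk (-\<epsilon>)) rw 0 2 (rule D)))
                \<ge> \<epsilon>))"
    using lowrank_sim f_reach pie_pol f_exp f_low by blast
  have f_valid: "valid_fclass ?A 2 (Fc \<epsilon>)" by (rule valid[OF e1])
  have f_bc0: "bellman_complete (Pk 0) rw ?A 2 (Fc \<epsilon>)" by (rule bc[OF e0]) simp
  have f_bc1: "bellman_complete (Pk \<epsilon>) rw ?A 2 (Fc \<epsilon>)" by (rule bc[OF e1]) simp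
  have f_bc2: "bellman_complete (Pk (-\<epsilon>)) rw ?A 2 (Fc \<epsilon>)" by (rule bc[OF e2]) simp
  have f_fin: "finite ?A" "?A \<noteq> {}" by auto
  show ?thesis
    apply (rule exI[where x="?A"], rule exI[where x=rw], rule exI[where x=0], rule exI[where x=2],
           rule exI[where x="Pk 0"], rule exI[where x="Pk \<epsilon>"], rule exI[where x="Pk (-\<epsilon>)"],
           rule exI[where x=2], rule exI[where x="Fc \<epsilon>"])
    using f_fin f_r f_tv f_lr1 f_lr2 f_sim f_valid f_bc0 f_bc1 f_bc2 by (intro conjI) assumption+
qed

end
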